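(* For integers $1\le k\le l$, up to a unit of $\mathbb{Z}[q,q^{-1}]$, $$\frac{g_{l,k}}{g_{l,k-1}}=\prod_{\substack{m\mid l-k+1\\ 1\le m\le k}}\Phi_m .$$
   Context: In $\mathbb{Z}[q,q^{-1}]$ set $\{i\}_q=q^i-1$, $\{i\}_{q,n}=\{i\}_q\cdots\{i-n+1\}_q$ (equal to $1$ for $n=0$), $\{n\}_q!=\{n\}_{q,n}$. For $0\le i\le k\le l$ set $h_{l,k,i}=\{l-i\}_{q,k-i}\{i\}_q!$ and $g_{l,k}=\mathrm{GCD}(h_{l,k,0},\dots,h_{l,k,k})$ (greatest common divisor in the UFD $\mathbb{Z}[q,q^{-1}]$, defined up to units $\pm q^j$). $\Phi_m$ is the $m$th cyclotomic polynomial. *)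

theory Defs
  imports Complex_Main "HOL-Computational_Algebra.Computational_Algebra"
begin

definition qbr :: "nat \<Rightarrow> int poly" where
  "qbr i = [:0, 1:] ^ i - 1"

definition qfall :: "nat \<Rightarrow> nat \<Rightarrow> int poly" where
  "qfall i n = (\<Prod>j<n. qbr (i - j))"

definition qfact :: "nat \<Rightarrow> int poly" where
  "qfact n = qfall n n"

definition h :: "nat \<Rightarrow> nat \<Rightarrow> nat \<Rightarrow> int poly" where
  "h l k i = qfall (l - i) (k - i) * qfact i"

definition g :: "nat \<Rightarrow> nat \<Rightarrow> int poly" where
  "g l k = Gcd (h l k ` {0..k})"

definition cyclotomic :: "nat \<Rightarrow> complex poly" where
  "cyclotomic m = (\<Prod>j\<in>{j. j < m \<and> coprime j m}.
       [:- cis (2 * pi * of_nat j / of_nat m), 1:])"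

end

theory Submission
  imports Defs
begin

abbreviation ci :: "int poly \<Rightarrow> complex poly" where "ci \<equiv> map_poly of_int"

lemma ci_add: "ci (p + q) = ci p + ci q"
  by (rule poly_eqI) (simp add: coeff_map_poly)
lemma ci_diff: "ci (p - q) = ci p - ci q"
  by (rule poly_eqI) (simp add: coeff_map_poly)
lemma ci_mult: "ci (p * q) = ci p * ci q"
  by (rule poly_eqI) (simp add: coeff_map_poly coeff_mult)
lemma ci_1: "ci 1 = 1" by simp
lemma ci_X: "ci [:0,1:] = [:0,1:]" by (rule poly_eqI) (simp add: coeff_map_poly coeff_pCons split: nat.splits)
lemma ci_power: "ci (p ^ n) = ci p ^ n"
  by (induction n) (simp_all add: ci_mult)
lemma ci_prod: "ci (\<Prod>i\<in>A. f i) = (\<Prod>i\<in>A. ci (f i))"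
  by (induction A rule: infinite_finite_induct) (simp_all add: ci_mult)
lemma ci_eq_0: "ci p = 0 \<longleftrightarrow> p = 0"
  by (simp add: map_poly_eq_0_iff)
lemma degree_ci: "degree (ci p) = degree p"
  by (simp add: degree_map_poly)
lemma lead_coeff_ci: "lead_coeff (ci p) = of_int (lead_coeff p)"
  by (simp add: degree_ci coeff_map_poly)
lemma ci_inj: "ci p = ci q \<Longrightarrow> p = q"
  using ci_eq_0[of "p - q"] by (simp add: ci_diff)

lemma lift_dvd:
  assumes b: "lead_coeff b = 1" and d: "ci b dvd ci a"
  shows "b dvd a"
proof -
  have b0: "b \<noteq> 0" using b by auto
  obtain q r where qr: "pseudo_divmod a b = (q, r)" by force
  note pd = pseudo_divmod[OF b0 qr]
  have a: "a = b * q + r" using pd(1) b by simp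
  obtain c where c: "ci a = ci b * c" using d by blast
  have "ci r = ci b * (c - ci q)" using a c by (simp add: ci_add ci_mult algebra_simps)
  have "r = 0"
  proof (rule ccontr)
    assume r0: "r \<noteq> 0"
    then have "ci r \<noteq> 0" by (simp add: ci_eq_0)
    with \<open>ci r = ci b * (c - ci q)\<close> have "c - ci q \<noteq> 0" by auto
    then have "degree (ci r) = degree (ci b) + degree (c - ci q)"
      using \<open>ci r = ci b * (c - ci q)\<close> b0 by (simp add: degree_mult_eq ci_eq_0)
    then have "degree r \<ge> degree b" by (simp add: degree_ci)
    with pd(2) r0 show False by simp
  qed
  with a show ?thesis by simp
qed


lemma order_prod:
  fixes f :: "'a \<Rightarrow> 'b::idom poly"
  assumes "finite A" "\<And>i. i \<in> A \<Longrightarrow> f i \<noteq> 0"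
  shows "order z (\<Prod>i\<in>A. f i) = (\<Sum>i\<in>A. order z (f i))"
  using assms
proof (induction A rule: finite_induct)
  case empty then show ?case by simp
next
  case (insert x F)
  have "(\<Prod>i\<in>F. f i) \<noteq> 0" using insert by auto
  moreover have "f x \<noteq> 0" using insert by auto
  ultimately show ?case using insert by (simp add: order_mult)
qed

lemma order_linear: "order z [:-a, 1:] = (if z = a then 1 else 0)"
  using order_power_n_n[of a 1] by (auto intro: order_0I)

lemma poly_eq_by_order:
  fixes p q :: "complex poly"
  assumes "p \<noteq> 0" "q \<noteq> 0" "lead_coeff p = lead_coeff q" "\<And>z. order z p = order z q"
  shows "p = q"
proof -
  have R: "{z. poly p z = 0} = {z. poly q z = 0}"
    using assms by (auto simp: order_root)
  have "p = smult (lead_coeff p) (\<Prod>z|poly p z = 0. [:-z, 1:] ^ order z p)"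
    by (rule complex_poly_decompose[symmetric])
  also have "\<dots> = smult (lead_coeff q) (\<Prod>z|poly q z = 0. [:-z, 1:] ^ order z q)"
    using R assms by simp
  also have "\<dots> = q" by (rule complex_poly_decompose)
  finally show ?thesis .
qed

lemma dvd_by_order:
  fixes p :: "complex poly"
  shows "p \<noteq> 0 \<Longrightarrow> q \<noteq> 0 \<Longrightarrow> (\<And>z. order z p \<le> order z q) \<Longrightarrow> p dvd q"
proof (induction p arbitrary: q rule: poly_root_order_induct)
  case 0 then show ?case by simp
next
  case (no_roots p)
  then have "degree p = 0"
    using fundamental_theorem_of_algebra constant_degree by blast
  then obtain c where c: "p = [:c:]" by (metis degree_eq_zeroE)
  with no_roots have "c \<noteq> 0" by auto
  then have "q = p * smult (1/c) q" using c by simp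
  then show ?case by (metis dvdI)
next
  case (root p x n)
  have p0: "p \<noteq> 0" using root by auto
  have "order x ([:-x, 1:] ^ n * p) = n"
    using root p0 by (simp add: order_mult order_power_n_n order_0I)
  then have "n \<le> order x q" using root(6)[of x] by simp
  then have "[:-x, 1:] ^ n dvd q" using order_divides by blast
  then obtain q' where q': "q = [:-x, 1:] ^ n * q'" by blast
  have q'0: "q' \<noteq> 0" using q' root by auto
  have "order z p \<le> order z q'" for z
    using root(6)[of z] q' q'0 p0 by (simp add: order_mult)
  then have "p dvd q'" using root p0 q'0 by blast
  then show ?case using q' by simp
qed

definition ordz :: "complex \<Rightarrow> nat" where
  "ordz z = (if \<exists>n>0. z ^ n = 1 then (LEAST n. n > 0 \<and> z ^ n = 1) else 0)"

lemma ordz_dvd_iff: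
  assumes "n > 0"
  shows "z ^ n = 1 \<longleftrightarrow> ordz z dvd n"
proof (cases "\<exists>n>0. z ^ n = 1")
  case False
  have "ordz z = 0" unfolding ordz_def using False by (intro if_not_P)
  moreover have "z ^ n \<noteq> 1" using False assms by blast
  ultimately show ?thesis using assms by simp
next
  case True
  define m where "m = (LEAST n. n > 0 \<and> z ^ n = 1)"
  have m: "m > 0" "z ^ m = 1" using LeastI_ex[OF True] by (auto simp: m_def)
  have mmin: "\<And>e. e > 0 \<Longrightarrow> z ^ e = 1 \<Longrightarrow> m \<le> e" unfolding m_def by (rule Least_le) simp
  have om: "ordz z = m" using True by (simp add: ordz_def m_def)
  show ?thesis
  proof
    assume zn: "z ^ n = 1"
    have "z ^ n = z ^ (m * (n div m) + n mod m)" by simp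
    also have "\<dots> = z ^ (n mod m)" by (simp only: power_add power_mult m power_one mult_1)
    finally have "z ^ (n mod m) = 1" using zn by simp
    moreover have "n mod m < m" using m by simp
    ultimately have "n mod m = 0" using mmin by (meson not_le neq0_conv)
    then show "ordz z dvd n" using om by auto
  next
    assume "ordz z dvd n"
    then obtain t where "n = m * t" using om by auto
    then show "z ^ n = 1" by (simp add: power_mult m)
  qed
qed

lemma ordz_eqI:
  assumes "d > 0" "\<And>n. n > 0 \<Longrightarrow> z ^ n = 1 \<longleftrightarrow> d dvd n"
  shows "ordz z = d"
proof -
  have "ordz z dvd d" using assms ordz_dvd_iff[of d z] by simp
  then have "ordz z > 0" using assms by (auto intro!: Nat.gr0I)
  then have "d dvd ordz z" using assms ordz_dvd_iff[of "ordz z" z] by simp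
  with \<open>ordz z dvd d\<close> show ?thesis by (simp add: dvd_antisym)
qed

lemma order_Xn1:
  assumes "n > 0"
  shows "order z ([:0,1:] ^ n - 1 :: complex poly) = (if ordz z dvd n then 1 else 0)"
proof -
  let ?p = "[:0,1:] ^ n - 1 :: complex poly"
  have pz: "poly ?p a = a ^ n - 1" for a by simp
  have p0: "?p \<noteq> 0" using pz[of 0] assms by (metis poly_0 power_0_left zero_neq_neg_one diff_0 neq0_conv)
  obtain m where n: "n = Suc m" using assms by (cases n) auto
  have X1: "pderiv [:0,1:] = (1::complex poly)" by (simp add: pderiv_pCons)
  have "pderiv ?p = pderiv ([:0,1:] ^ Suc m)" by (simp add: n pderiv_diff)
  also have "\<dots> = smult (of_nat n) ([:0,1:] ^ m)"
    by (simp only: pderiv_power_Suc X1 n mult_1_right)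
  finally have "pderiv ?p = smult (of_nat n) ([:0,1:] ^ m)" .
  then have pd: "poly (pderiv ?p) a = of_nat n * a ^ m" for a by simp
  have "rsquarefree ?p"
    unfolding rsquarefree_roots
  proof (intro allI notI)
    fix a assume "poly ?p a = 0 \<and> poly (pderiv ?p) a = 0"
    then have "a ^ n = 1" "of_nat n * a ^ m = 0" using pz pd by auto
    then show False using assms by (cases "a = 0") (auto simp: power_0_left)
  qed
  show ?thesis
  proof (cases "z ^ n = 1")
    case True
    then have "order z ?p = 1" using rsquarefree_root_order[OF \<open>rsquarefree ?p\<close> _ p0] by simp
    then show ?thesis using True ordz_dvd_iff[OF assms] by simp
  next
    case False
    then have "order z ?p = 0" by (intro order_0I) simp
    then show ?thesis using False ordz_dvd_iff[OF assms] by simp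
  qed
qed



definition om :: "nat \<Rightarrow> complex" where "om d = cis (2 * pi / real d)"

lemma om_pow: "om d ^ j = cis (2 * pi * of_nat j / of_nat d)"
  by (simp add: om_def DeMoivre field_simps)

lemma om_d: "d > 0 \<Longrightarrow> om d ^ d = 1"
  by (simp add: om_pow complex_eq_iff)

lemma om_inj: "d > 0 \<Longrightarrow> inj_on (\<lambda>j. om d ^ j) {..<d}"
  using bij_betw_roots_unity[of d] unfolding bij_betw_def by (simp add: om_pow)

lemma om_surj: "d > 0 \<Longrightarrow> z ^ d = 1 \<Longrightarrow> \<exists>j<d. z = om d ^ j"
  using bij_betw_roots_unity[of d] unfolding bij_betw_def by (auto simp: om_pow)

lemma om_mod: "d > 0 \<Longrightarrow> om d ^ a = om d ^ (a mod d)"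
proof -
  assume d: "d > 0"
  have "om d ^ a = om d ^ (d * (a div d) + a mod d)" by simp
  also have "\<dots> = om d ^ (a mod d)" by (simp only: power_add power_mult om_d[OF d] power_one mult_1)
  finally show ?thesis .
qed

lemma om_eq_1: "d > 0 \<Longrightarrow> om d ^ a = 1 \<longleftrightarrow> d dvd a"
proof -
  assume d: "d > 0"
  have "om d ^ a = 1 \<longleftrightarrow> om d ^ (a mod d) = om d ^ 0" using om_mod[OF d, of a] by simp
  also have "\<dots> \<longleftrightarrow> a mod d = 0"
    using om_inj[OF d] d unfolding inj_on_def by (metis lessThan_iff mod_less_divisor)
  finally show ?thesis by auto
qed

lemma ordz_om: "d > 0 \<Longrightarrow> coprime j d \<Longrightarrow> ordz (om d ^ j) = d"
  by (intro ordz_eqI) (auto simp: power_mult[symmetric] om_eq_1 coprime_dvd_mult_right_iff coprime_commute)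

lemma cyc_om: "cyclotomic d = (\<Prod>j\<in>{j. j < d \<and> coprime j d}. [:- (om d ^ j), 1:])"
  by (simp add: cyclotomic_def om_pow)

lemma cyc_lead: "lead_coeff (cyclotomic d) = 1"
  by (simp add: cyc_om lead_coeff_prod)

lemma cyc_nz: "cyclotomic d \<noteq> 0"
  using cyc_lead by (metis leading_coeff_0_iff zero_neq_one)

lemma cyc_order:
  assumes d: "d > 0"
  shows "order z (cyclotomic d) = (if ordz z = d then 1 else 0)"
proof -
  define S where "S = {j. j < d \<and> coprime j d}"
  have fS: "finite S" by (simp add: S_def)
  have "order z (cyclotomic d) = (\<Sum>j\<in>S. order z [:- (om d ^ j), 1:])"
    unfolding cyc_om S_def[symmetric] by (rule order_prod[OF fS]) simp
  also have "\<dots> = (\<Sum>j\<in>S. if z = om d ^ j then 1 else 0)"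
    by (simp add: order_linear)
  also have "\<dots> = card {j\<in>S. z = om d ^ j}"
    using fS by (simp add: sum.If_cases Int_def)
  also have "\<dots> = (if ordz z = d then 1 else 0)"
  proof (cases "ordz z = d")
    case True
    then have "z ^ d = 1" using ordz_dvd_iff[OF d, of z] by simp
    then obtain j where j: "j < d" "z = om d ^ j" using om_surj[OF d] by blast
    define g where "g = gcd j d"
    have g0: "g > 0" using d by (simp add: g_def)
    have "g dvd d" "g dvd j" by (simp_all add: g_def)
    then obtain a b where a: "d = g * a" and b: "j = g * b" by (metis dvdE)
    have a0: "a > 0" using d a by auto
    have "z ^ a = om d ^ (j * a)" using j by (simp add: power_mult)
    also have "j * a = b * d" using a b by simp
    also have "om d ^ (b * d) = 1" by (simp add: power_mult_distrib power_mult om_d[OF d] mult.commute[of b] )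
    finally have "d dvd a" using ordz_dvd_iff[OF a0, of z] True by simp
    then have "g = 1" using a a0 g0 by (metis dvd_imp_le mult_le_cancel2 mult_1 nat_mult_le_cancel_disj le_antisym not_less_eq_eq One_nat_def Suc_leI nat_0_less_mult_iff)
    then have "coprime j d" by (simp add: g_def coprime_iff_gcd_eq_1)
    then have jS: "j \<in> S" using j by (simp add: S_def)
    have "{j\<in>S. z = om d ^ j} = {j}"
    proof safe
      fix i assume "i \<in> S" "z = om d ^ i"
      then show "i = j" using om_inj[OF d] j unfolding inj_on_def S_def by auto
    qed (use jS j in auto)
    then show ?thesis using True by simp
  next
    case False
    have "{j\<in>S. z = om d ^ j} = {}"
      using False ordz_om[OF d] by (auto simp: S_def)
    then have "card {j\<in>S. z = om d ^ j} = 0" by (simp only: card.empty)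
    then show ?thesis using False by simp
  qed
  finally show ?thesis .
qed

lemma Xn1_lead:
  assumes n: "n > 0"
  shows "lead_coeff ([:0,1:] ^ n - 1 :: complex poly) = 1"
proof -
  let ?p = "[:0,1:] ^ n - 1 :: complex poly"
  have X: "[:0,1:] ^ n = (monom 1 n :: complex poly)" by (simp add: monom_altdef)
  have c: "coeff ?p n = 1" using n by (simp add: X coeff_monom)
  have "degree ?p \<le> n" unfolding X
    by (rule order.trans[OF degree_diff_le_max]) (simp add: degree_monom_le)
  moreover have "n \<le> degree ?p" using c by (intro le_degree) simp
  ultimately have "degree ?p = n" by simp
  then show ?thesis using c by simp
qed

lemma Xn1_nz: "n > 0 \<Longrightarrow> ([:0,1:] ^ n - 1 :: complex poly) \<noteq> 0"
  using Xn1_lead[of n] by (metis leading_coeff_0_iff zero_neq_one)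

lemma Xn1_cyc:
  assumes n: "n > 0"
  shows "([:0,1:] ^ n - 1 :: complex poly) = (\<Prod>d\<in>{d. d dvd n}. cyclotomic d)"
proof (rule poly_eq_by_order)
  have fin: "finite {d. d dvd n}" using n by simp
  have pos: "d \<in> {d. d dvd n} \<Longrightarrow> d > 0" for d using n by (auto intro: Nat.gr0I)
  show "([:0,1:] ^ n - 1 :: complex poly) \<noteq> 0"
    using n by (rule Xn1_nz)
  show "(\<Prod>d\<in>{d. d dvd n}. cyclotomic d) \<noteq> 0" using fin cyc_nz by simp
  show "lead_coeff ([:0,1:] ^ n - 1 :: complex poly) = lead_coeff (\<Prod>d\<in>{d. d dvd n}. cyclotomic d)"
    unfolding Xn1_lead[OF n] by (simp add: lead_coeff_prod cyc_lead)
  fix z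
  have "order z (\<Prod>d\<in>{d. d dvd n}. cyclotomic d) = (\<Sum>d\<in>{d. d dvd n}. order z (cyclotomic d))"
    using fin cyc_nz by (intro order_prod) auto
  also have "\<dots> = (\<Sum>d\<in>{d. d dvd n}. if ordz z = d then 1 else 0)"
    using pos by (intro sum.cong) (auto simp: cyc_order)
  also have "\<dots> = (if ordz z dvd n then 1 else 0)"
    using fin by (simp add: sum.delta)
  finally show "order z ([:0,1:] ^ n - 1 :: complex poly) = order z (\<Prod>d\<in>{d. d dvd n}. cyclotomic d)"
    using order_Xn1[OF n] by simp
qed



lemma ci_Xn1: "ci ([:0,1:] ^ n - 1) = [:0,1:] ^ n - 1"
  by (simp add: ci_diff ci_power ci_X)

lemma cyc_int: "d > 0 \<Longrightarrow> \<exists>c. ci c = cyclotomic d"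
proof (induction d rule: less_induct)
  case (less d)
  define T where "T = {e. e dvd d \<and> e < d}"
  define c where "c e = (SOME c. ci c = cyclotomic e)" for e
  have finT: "finite T" using less.prems by (simp add: T_def)
  have cT: "ci (c e) = cyclotomic e" if "e \<in> T" for e
  proof -
    have "e > 0" "e < d" using that less.prems by (auto simp: T_def intro: Nat.gr0I)
    then have "\<exists>c. ci c = cyclotomic e" using less.IH by blast
    then show ?thesis unfolding c_def by (rule someI_ex)
  qed
  define Q where "Q = (\<Prod>e\<in>T. c e)"
  have ciQ: "ci Q = (\<Prod>e\<in>T. cyclotomic e)"
    unfolding Q_def ci_prod using cT by (intro prod.cong) auto
  have "lead_coeff (ci Q) = 1" unfolding ciQ by (simp add: lead_coeff_prod cyc_lead)
  then have lQ: "lead_coeff Q = 1" by (simp add: lead_coeff_ci)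
  have ciQ0: "ci Q \<noteq> 0" unfolding ciQ using finT cyc_nz by simp
  have S1: "{e. e dvd d} = insert d T"
  proof (intro set_eqI iffI)
    fix e assume "e \<in> {e. e dvd d}"
    then have "e dvd d" by simp
    then have "e \<le> d" using less.prems by (simp add: dvd_imp_le)
    then show "e \<in> insert d T" using \<open>e dvd d\<close> by (auto simp: T_def)
  qed (auto simp: T_def)
  have S: "{e. e dvd d} = insert d T" "d \<notin> T" using S1 by (auto simp: T_def)
  have E: "ci ([:0,1:] ^ d - 1) = ci Q * cyclotomic d"
    unfolding ci_Xn1 Xn1_cyc[OF less.prems] S(1) using finT S(2) by (simp add: ciQ mult.commute)
  then have "ci Q dvd ci ([:0,1:] ^ d - 1)" by simp
  then have "Q dvd [:0,1:] ^ d - 1" using lift_dvd lQ by blast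
  then obtain r where r: "[:0,1:] ^ d - 1 = Q * r" by blast
  have "ci Q * ci r = ci Q * cyclotomic d" using E r by (simp add: ci_mult)
  then have "ci r = cyclotomic d" using ciQ0 by simp
  then show ?case by blast
qed

definition cycZ :: "nat \<Rightarrow> int poly" where "cycZ d = (SOME c. ci c = cyclotomic d)"

lemma ci_cycZ: "d > 0 \<Longrightarrow> ci (cycZ d) = cyclotomic d"
  unfolding cycZ_def using cyc_int by (rule someI_ex)

lemma ci_qbr: "ci (qbr n) = [:0,1:] ^ n - 1"
  by (simp add: qbr_def ci_Xn1)

lemma order_qbr: "n > 0 \<Longrightarrow> order z (ci (qbr n)) = (if ordz z dvd n then 1 else 0)"
  by (simp add: ci_qbr order_Xn1)

lemma div_step:
  fixes n m :: nat
  assumes n: "n > 0"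
  shows "n div m = (n - 1) div m + (if m dvd n then 1 else 0)"
proof (cases "m = 0")
  case True then show ?thesis using n by simp
next
  case False
  obtain k where k: "n = Suc k" using n by (cases n) auto
  have "Suc k div m = k div m + (if m dvd Suc k then 1 else 0)"
    using False by (simp add: div_Suc mod_greater_zero_iff_not_dvd)
  then show ?thesis using k by simp
qed

lemma cnt_sum: "c \<le> n \<Longrightarrow> (\<Sum>j<c. if m dvd (n - j) then 1 else 0) = n div m - (n - c) div m"
  for m n c :: nat
proof (induction c)
  case 0 then show ?case by simp
next
  case (Suc c)
  have nc: "n - c - 1 = n - Suc c" by simp
  have pos: "n - c > 0" using Suc.prems by simp
  have a: "(n - c) div m = (n - Suc c) div m + (if m dvd (n - c) then 1 else 0)"
    using div_step[OF pos, of m] unfolding nc .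
  have b: "(n - c) div m \<le> n div m" by (simp add: div_le_mono)
  have ih: "(\<Sum>j<c. if m dvd (n - j) then 1 else 0) = n div m - (n - c) div m"
    using Suc by simp
  have "(\<Sum>j<Suc c. if m dvd (n - j) then 1 else 0) =
        (\<Sum>j<c. if m dvd (n - j) then 1 else (0::nat)) + (if m dvd (n - c) then 1 else 0)"
    by (simp only: sum.lessThan_Suc)
  then show ?case using ih a b by linarith
qed

lemma ci_qbr_nz: "n > 0 \<Longrightarrow> ci (qbr n) \<noteq> 0"
  unfolding ci_qbr by (rule Xn1_nz)

lemma qbr_nz: assumes "n > 0" shows "qbr n \<noteq> 0"
proof
  assume "qbr n = 0"
  then have "ci (qbr n) = 0" by simp
  with ci_qbr_nz[OF assms] show False by simp
qed

lemma order_qfall: "c \<le> n \<Longrightarrow> order z (ci (qfall n c)) = n div ordz z - (n - c) div ordz z"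
proof -
  assume cn: "c \<le> n"
  have "order z (ci (qfall n c)) = (\<Sum>j<c. order z (ci (qbr (n - j))))"
    unfolding qfall_def ci_prod using cn by (intro order_prod) (auto intro!: ci_qbr_nz)
  also have "\<dots> = (\<Sum>j<c. if ordz z dvd (n - j) then 1 else 0)"
    using cn by (intro sum.cong) (auto simp: order_qbr)
  also have "\<dots> = n div ordz z - (n - c) div ordz z" using cnt_sum[OF cn] .
  finally show ?thesis .
qed

lemma qfall_nz: "c \<le> n \<Longrightarrow> qfall n c \<noteq> 0"
  unfolding qfall_def using qbr_nz by (auto simp: prod_zero_iff)

definition F :: "nat \<Rightarrow> nat \<Rightarrow> nat \<Rightarrow> nat \<Rightarrow> nat" where
  "F m l k i = (l - i) div m - (l - k) div m + i div m"

lemma h_nz: "i \<le> k \<Longrightarrow> k \<le> l \<Longrightarrow> h l k i \<noteq> 0"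
  unfolding h_def qfact_def using qfall_nz by simp

lemma order_h: "i \<le> k \<Longrightarrow> k \<le> l \<Longrightarrow> order z (ci (h l k i)) = F (ordz z) l k i"
proof -
  assume ik: "i \<le> k" and kl: "k \<le> l"
  have "order z (ci (h l k i)) = order z (ci (qfall (l - i) (k - i))) + order z (ci (qfact i))"
    unfolding h_def ci_mult using qfall_nz ik kl
    by (intro order_mult) (simp add: ci_eq_0 qfact_def)
  also have "\<dots> = F (ordz z) l k i"
    using ik kl by (simp add: order_qfall qfact_def F_def)
  finally show ?thesis .
qed



lemma key_id:
  fixes i l m :: nat
  assumes il: "i \<le> l" and m: "m > 0"
  shows "(l - i) div m + i div m + (if l mod m < i mod m then 1 else 0) = l div m"
proof -
  define a s b r where "a = i div m" "s = i mod m" "b = l div m" "r = l mod m"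
  have i: "i = a * m + s" and l: "l = b * m + r" by (simp_all add: a_s_b_r_def)
  have s: "s < m" and r: "r < m" using m by (simp_all add: a_s_b_r_def)
  have ab: "a \<le> b" using il by (simp add: a_s_b_r_def div_le_mono)
  show ?thesis
  proof (cases "r < s")
    case False
    have "l - i = (b - a) * m + (r - s)" using i l ab False
      by (simp add: diff_mult_distrib)
    then have "(l - i) div m = b - a" using r by (simp add: div_add1_eq) 
    then show ?thesis using False ab by (simp add: a_s_b_r_def[symmetric])
  next
    case True
    have "a < b"
    proof (rule ccontr)
      assume "\<not> a < b" then have "a = b" using ab by simp
      then show False using i l il True by simp
    qed
    obtain t where t: "b = Suc (a + t)" using \<open>a < b\<close> by (metis less_iff_Suc_add)
    have "l - i = t * m + (m + r - s)" using i l t True s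
      by (simp add: algebra_simps)
    moreover have "b - a - 1 = t" using t by simp
    ultimately have "l - i = (b - a - 1) * m + (m + r - s)" by simp
    moreover have "m + r - s < m" using True s by simp
    ultimately have "(l - i) div m = b - a - 1" by (simp add: div_add1_eq)
    then show ?thesis using True \<open>a < b\<close> by (simp add: a_s_b_r_def[symmetric])
  qed
qed

lemma F_id:
  assumes "i \<le> k" "k \<le> l" "m > 0"
  shows "F m l k i + (l - k) div m + (if l mod m < i mod m then 1 else 0) = l div m"
proof -
  have "(l - k) div m \<le> (l - i) div m" using assms by (simp add: div_le_mono)
  then have "F m l k i + (l - k) div m = (l - i) div m + i div m" by (simp add: F_def)
  then show ?thesis using key_id[of i l m] assms by simp
qed

definition E :: "nat \<Rightarrow> nat \<Rightarrow> nat \<Rightarrow> nat" where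
  "E m l k = Min (F m l k ` {0..k})"

lemma E_le: "i \<le> k \<Longrightarrow> E m l k \<le> F m l k i"
  unfolding E_def by (rule Min_le) auto

lemma E_in: "\<exists>i\<le>k. E m l k = F m l k i"
proof -
  have "E m l k \<in> F m l k ` {0..k}" unfolding E_def by (rule Min_in) auto
  then show ?thesis by auto
qed

lemma E_closed:
  assumes kl: "k \<le> l" and m: "m > 0"
  shows "E m l k + (l - k) div m + (if l mod m + 1 < m \<and> l mod m + 1 \<le> k then 1 else 0) = l div m"
proof -
  define B where "B = (if l mod m + 1 < m \<and> l mod m + 1 \<le> k then 1 else 0 :: nat)"
  define i0 where "i0 = (if B = 1 then l mod m + 1 else 0)"
  have i0k: "i0 \<le> k" by (simp add: i0_def B_def)
  have i0B: "(if l mod m < i0 mod m then 1 else 0) = B"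
    by (auto simp: i0_def B_def)
  have Bi: "(if l mod m < i mod m then 1 else 0) \<le> B" if "i \<le> k" for i
  proof -
    have x: "i mod m \<le> i" by (rule mod_less_eq_dividend)
    have y: "i mod m < m" using m by simp
    show ?thesis
    proof (cases "l mod m < i mod m")
      case True
      then have "l mod m + 1 < m \<and> l mod m + 1 \<le> k" using x y that by linarith
      then show ?thesis using True by (simp add: B_def)
    qed simp
  qed
  have "E m l k = F m l k i0"
    unfolding E_def
  proof (rule Min_eqI)
    show "F m l k i0 \<in> F m l k ` {0..k}" using i0k by simp
    fix y assume "y \<in> F m l k ` {0..k}"
    then obtain i where i: "i \<le> k" "y = F m l k i" by auto
    show "F m l k i0 \<le> y"
      using F_id[OF i(1) kl m] F_id[OF i0k kl m] i0B Bi[OF i(1)] i(2) by linarith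
  qed simp
  then show ?thesis using F_id[OF i0k kl m] i0B by (simp add: B_def)
qed

lemma E_0: "E 0 l k = 0"
proof -
  have "E 0 l k \<le> F 0 l k 0" by (rule E_le) simp
  then show ?thesis by (simp add: F_def)
qed

lemma E_big: "k \<le> l \<Longrightarrow> l < m \<Longrightarrow> E m l k = 0"
proof -
  assume "k \<le> l" "l < m"
  have "E m l k \<le> F m l k 0" by (rule E_le) simp
  then show ?thesis using \<open>k \<le> l\<close> \<open>l < m\<close> by (simp add: F_def)
qed

lemma ind_arith:
  fixes m l k :: nat
  assumes m: "m > 0" and k1: "1 \<le> k" and kl: "k \<le> l"
  shows "(if m dvd (l - k + 1) then 1 else 0) + (if l mod m + 1 < m \<and> l mod m + 1 \<le> k - 1 then 1 else 0)
       = (if m dvd (l - k + 1) \<and> m \<le> k then 1 else (0::nat)) + (if l mod m + 1 < m \<and> l mod m + 1 \<le> k then 1 else 0)"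
proof (cases "l mod m + 1 = k \<and> k < m")
  case True
  have "l - k + 1 = l - l mod m" using True kl by linarith
  then have "m dvd (l - k + 1)" by (simp add: minus_mod_eq_mult_div)
  then show ?thesis using True by auto
next
  case False
  have "m dvd (l - k + 1) \<Longrightarrow> k < m \<Longrightarrow> False"
  proof -
    assume d: "m dvd (l - k + 1)" and km: "k < m"
    have "l - k + 1 = l - (k - 1)" using k1 kl by simp
    then have "l mod m = (k - 1) mod m" using d kl mod_eq_dvd_iff_nat[of "k - 1" l m] by simp
    also have "\<dots> = k - 1" using km by simp
    finally show False using False km k1 by simp
  qed
  then show ?thesis using False k1 by (auto simp: not_less)
qed

lemma E_step:
  assumes k1: "1 \<le> k" and kl: "k \<le> l"
  shows "E m l k = E m l (k - 1) + (if m dvd (l - k + 1) \<and> 1 \<le> m \<and> m \<le> k then 1 else 0)"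
proof (cases "m = 0")
  case True then show ?thesis by (simp add: E_0)
next
  case False
  then have m: "m > 0" by simp
  have c1: "E m l k + (l - k) div m + (if l mod m + 1 < m \<and> l mod m + 1 \<le> k then 1 else 0) = l div m"
    using E_closed[OF kl m] .
  have k1l: "k - 1 \<le> l" using kl by simp
  have c0: "E m l (k - 1) + (l - (k - 1)) div m + (if l mod m + 1 < m \<and> l mod m + 1 \<le> k - 1 then 1 else 0) = l div m"
    using E_closed[OF k1l m] .
  have e: "l - (k - 1) = l - k + 1" using k1 kl by simp
  have pos: "l - k + 1 > 0" by simp
  have ds: "(l - k + 1) div m = (l - k) div m + (if m dvd (l - k + 1) then 1 else 0)"
    using div_step[OF pos, of m] by simp
  note ia = ind_arith[OF m k1 kl]
  have r: "(if m dvd (l - k + 1) \<and> 1 \<le> m \<and> m \<le> k then 1 else (0::nat)) = (if m dvd (l - k + 1) \<and> m \<le> k then 1 else 0)"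
    using m by simp
  show ?thesis unfolding r using c1 c0 ds ia unfolding e by linarith
qed


lemma qbr_lead: "n > 0 \<Longrightarrow> lead_coeff (qbr n) = 1"
proof -
  assume n: "n > 0"
  have "(of_int (lead_coeff (qbr n)) :: complex) = 1"
    using lead_coeff_ci[of "qbr n"] ci_qbr[of n] Xn1_lead[OF n] by simp
  then show ?thesis by simp
qed

lemma qfall_lead: "c \<le> n \<Longrightarrow> lead_coeff (qfall n c) = 1"
  unfolding qfall_def lead_coeff_prod by (rule prod.neutral) (auto intro: qbr_lead)

lemma h_lead: "i \<le> k \<Longrightarrow> k \<le> l \<Longrightarrow> lead_coeff (h l k i) = 1"
  unfolding h_def qfact_def by (simp add: lead_coeff_mult qfall_lead)

lemma order_pow: "p \<noteq> 0 \<Longrightarrow> order z (p ^ n) = n * order z p"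
  for p :: "'a::idom poly"
  by (induction n) (simp_all add: order_mult)

lemma g_props:
  assumes kl: "k \<le> l"
  shows "g l k \<noteq> 0" "lead_coeff (g l k) = 1 \<or> lead_coeff (g l k) = -1"
    "order z (ci (g l k)) = E (ordz z) l k"
proof -
  have dv: "g l k dvd h l k i" if "i \<le> k" for i
    unfolding g_def using that by (intro Gcd_dvd) simp
  obtain r where h0: "h l k 0 = g l k * r" using dv[of 0] by blast
  have h0nz: "h l k 0 \<noteq> 0" using h_nz kl by simp
  show g0: "g l k \<noteq> 0" using h0 h0nz by auto
  have "lead_coeff (g l k) * lead_coeff r = 1"
    using h0 h_lead[of 0 k l] kl by (simp add: lead_coeff_mult)
  then have "lead_coeff (g l k) = 1 \<and> lead_coeff r = 1 \<or> lead_coeff (g l k) = -1 \<and> lead_coeff r = -1"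
    by (simp only: zmult_eq_1_iff)
  then show "lead_coeff (g l k) = 1 \<or> lead_coeff (g l k) = -1"
    by (elim disjE conjE) (rule disjI1, assumption, rule disjI2, assumption)
  define P where "P = (\<Prod>m\<in>{1..l}. cycZ m ^ E m l k)"
  have ciP: "ci P = (\<Prod>m\<in>{1..l}. cyclotomic m ^ E m l k)"
    unfolding P_def ci_prod ci_power by (intro prod.cong) (auto simp: ci_cycZ)
  have P0: "ci P \<noteq> 0" unfolding ciP using cyc_nz by simp
  have "lead_coeff (ci P) = 1" unfolding ciP by (simp add: lead_coeff_prod lead_coeff_power cyc_lead)
  then have lP: "lead_coeff P = 1" by (simp add: lead_coeff_ci)
  have oP: "order w (ci P) = E (ordz w) l k" for w
  proof -
    have "order w (ci P) = (\<Sum>m\<in>{1..l}. order w (cyclotomic m ^ E m l k))"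
      unfolding ciP using cyc_nz by (intro order_prod) auto
    also have "\<dots> = (\<Sum>m\<in>{1..l}. if ordz w = m then E m l k else 0)"
      by (intro sum.cong) (auto simp: order_pow cyc_nz cyc_order)
    also have "\<dots> = (if ordz w \<in> {1..l} then E (ordz w) l k else 0)"
      by (simp add: sum.delta)
    also have "\<dots> = E (ordz w) l k"
      using E_0 E_big[OF kl] by (cases "ordz w = 0") (auto simp: not_le)
    finally show ?thesis .
  qed
  have Pd: "P dvd h l k i" if "i \<le> k" for i
  proof (rule lift_dvd[OF lP])
    show "ci P dvd ci (h l k i)"
    proof (rule dvd_by_order[OF P0])
      show "ci (h l k i) \<noteq> 0" using h_nz[OF that kl] by (simp add: ci_eq_0)
      fix w show "order w (ci P) \<le> order w (ci (h l k i))"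
        unfolding oP order_h[OF that kl] by (rule E_le[OF that])
    qed
  qed
  have "P dvd g l k" unfolding g_def by (rule Gcd_greatest) (use Pd in auto)
  then have "ci P dvd ci (g l k)" by (metis ci_mult dvd_def)
  then have ge: "E (ordz z) l k \<le> order z (ci (g l k))"
    using dvd_imp_order_le[of "ci (g l k)" "ci P" z] g0 by (simp add: ci_eq_0 oP)
  obtain i where i: "i \<le> k" "E (ordz z) l k = F (ordz z) l k i" using E_in by blast
  have "ci (g l k) dvd ci (h l k i)" using dv[OF i(1)] by (metis ci_mult dvd_def)
  then have "order z (ci (g l k)) \<le> order z (ci (h l k i))"
    using h_nz[OF i(1) kl] by (intro dvd_imp_order_le) (simp_all add: ci_eq_0)
  then have le: "order z (ci (g l k)) \<le> E (ordz z) l k" using i order_h[OF i(1) kl] by simp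
  show "order z (ci (g l k)) = E (ordz z) l k" using ge le by simp
qed

theorem mainTheorem5:
  fixes l k :: nat
  assumes "1 \<le> k" and "k \<le> l"
  shows "\<exists>u::int. (u = 1 \<or> u = -1) \<and>
           map_poly of_int (g l k) =
           smult (of_int u) (map_poly of_int (g l (k - 1)) *
              (\<Prod>m\<in>{m. m dvd (l - k + 1) \<and> 1 \<le> m \<and> m \<le> k}. cyclotomic m))"
proof -
  define S where "S = {m. m dvd (l - k + 1) \<and> 1 \<le> m \<and> m \<le> k}"
  define P where "P = (\<Prod>m\<in>S. cyclotomic m)"
  have finS: "finite S" unfolding S_def by (rule finite_subset[of _ "{1..k}"]) auto
  have k1l: "k - 1 \<le> l" using assms by simp
  note G1 = g_props[OF assms(2)]
  note G0 = g_props[OF k1l]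
  define e1 where "e1 = lead_coeff (g l k)"
  define e0 where "e0 = lead_coeff (g l (k - 1))"
  define u where "u = e1 * e0"
  have e1: "e1 = 1 \<or> e1 = -1" using G1(2) by (simp add: e1_def)
  have e0: "e0 = 1 \<or> e0 = -1" using G0(2) by (simp add: e0_def)
  have u: "u = 1 \<or> u = -1" using e1 e0 by (auto simp: u_def)
  have P0: "P \<noteq> 0" unfolding P_def using finS cyc_nz by simp
  have lP: "lead_coeff P = 1" unfolding P_def by (simp add: lead_coeff_prod cyc_lead)
  have oP: "order z P = (if ordz z dvd (l - k + 1) \<and> 1 \<le> ordz z \<and> ordz z \<le> k then 1 else 0)" for z
  proof -
    have "order z P = (\<Sum>m\<in>S. order z (cyclotomic m))"
      unfolding P_def using finS cyc_nz by (intro order_prod) auto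
    also have "\<dots> = (\<Sum>m\<in>S. if ordz z = m then 1 else 0)"
      by (intro sum.cong) (auto simp: S_def cyc_order)
    also have "\<dots> = (if ordz z \<in> S then 1 else 0)" using finS by (simp add: sum.delta)
    finally show ?thesis by (simp add: S_def)
  qed
  have "ci (g l k) = smult (of_int u) (ci (g l (k - 1)) * P)"
  proof (rule poly_eq_by_order)
    show "ci (g l k) \<noteq> 0" using G1(1) by (simp add: ci_eq_0)
    show "smult (of_int u) (ci (g l (k - 1)) * P) \<noteq> 0" using G0(1) P0 u by (auto simp: ci_eq_0)
    have "e0 * e0 = 1" using e0 by auto
    then have "e1 = u * e0" by (simp add: u_def mult.assoc)
    then have eu: "(of_int e1 :: complex) = of_int u * of_int e0" by simp
    have L1: "lead_coeff (ci (g l k)) = of_int e1" unfolding e1_def by (rule lead_coeff_ci)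
    have L0: "lead_coeff (ci (g l (k - 1))) = of_int e0" unfolding e0_def by (rule lead_coeff_ci)
    show "lead_coeff (ci (g l k)) = lead_coeff (smult (of_int u) (ci (g l (k - 1)) * P))"
      unfolding L1 lead_coeff_smult lead_coeff_mult L0 lP using eu by simp
    fix z
    have "order z (smult (of_int u) (ci (g l (k - 1)) * P)) = order z (ci (g l (k - 1))) + order z P"
      using u G0(1) P0 by (subst order_smult) (auto simp: order_mult ci_eq_0)
    then show "order z (ci (g l k)) = order z (smult (of_int u) (ci (g l (k - 1)) * P))"
      using G1(3)[of z] G0(3)[of z] oP[of z] E_step[OF assms, of "ordz z"] by simp
  qed
  then show ?thesis using u unfolding P_def S_def by blast
qed


end
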